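(* Let $G$ be an abelian group and $\phi\in\mathcal{P}^{\mathbb{H}}_*(G)$. If $\mu$ is the unique nonnegative Radon measure on $G^\delta$ with $\phi(g)=\int_{G^\delta}\gamma(g)\,d\mu(\gamma)$ for all $g\in G$, then the restrictions of $\mu^{\hat *}$ and $\mu$ to $G^\delta\setminus G^\delta_{\mathbb{R}}$ are mutually singular.
   Context: $\mathbb{H}$ is the real quaternion algebra, $\mathbb{S}=\{q\in\mathbb{H}:|q|=1\}$. For an abelian group $G$, $\phi:G\to\mathbb{H}$ is positive definite if for all $k$, $g_i\in G$, $q_i\in\mathbb{H}$, $\sum_{i,j=1}^k\overline{q_i}\,\phi(g_j-g_i)\,q_j$ is a nonnegative real number; $\mathcal{P}^{\mathbb{H}}_*(G)$ is the set of such $\phi$ with $\phi(0)=1$. $G^\delta=\mathrm{Hom}(G,\mathbb{S})$ with the topology of pointwise convergence; $G^\delta_{\mathbb{R}}\subseteq G^\delta$ is the subset of real-valued homomorphisms (i.e. with values in $\{\pm1\}$). The involution on $G^\delta$ is $\gamma\mapsto\gamma^*:=\overline{\gamma}$ (pointwise quaternionic conjugation), a homeomorphism of $G^\delta$; for a Radon measure $\mu$ on $G^\delta$, $\mu^{\hat*}$ is the push-forward, $\mu^{\hat*}(\Omega)=\mu(\Omega^* )$ for Borel $\Omega\subseteq G^\delta$, where $\Omega^*=\{\gamma^*:\gamma\in\Omega\}$. *)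

theory Defs
  imports "HOL-Analysis.Analysis"
begin

text \<open>A quaternion a + b j (a, b complex, j z = cnj z j) is the pair (a, b).
  Addition, real scaling and the norm of the product type complex \<times> complex
  coincide with those of the quaternions.\<close>

type_synonym quat = "complex \<times> complex"

definition qmul :: "quat \<Rightarrow> quat \<Rightarrow> quat" where
  "qmul p q = (fst p * fst q - snd p * cnj (snd q), fst p * snd q + snd p * cnj (fst q))"

definition qcnj :: "quat \<Rightarrow> quat" where
  "qcnj q = (cnj (fst q), - snd q)"

definition qone :: quat where
  "qone = (1, 0)"

definition qreal :: "real \<Rightarrow> quat" where
  "qreal r = (complex_of_real r, 0)"

definition pos_def_quat :: "('g::ab_group_add \<Rightarrow> quat) \<Rightarrow> bool" where
  "pos_def_quat \<phi> \<longleftrightarrow>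
     (\<forall>(k::nat) (g::nat \<Rightarrow> 'g) (q::nat \<Rightarrow> quat).
        \<exists>r\<ge>0. (\<Sum>i<k. \<Sum>j<k. qmul (qmul (qcnj (q i)) (\<phi> (g j - g i))) (q j)) = qreal r)"

definition P_star :: "('g::ab_group_add \<Rightarrow> quat) set" where
  "P_star = {\<phi>. pos_def_quat \<phi> \<and> \<phi> 0 = qone}"

text \<open>Topology of pointwise convergence = product topology on 'g \<Rightarrow> quat.\<close>

definition dual_hom :: "('g::ab_group_add \<Rightarrow> quat) set" where
  "dual_hom = {\<gamma>. (\<forall>g h. \<gamma> (g + h) = qmul (\<gamma> g) (\<gamma> h)) \<and> (\<forall>g. norm (\<gamma> g) = 1)}"

definition dual_hom_real :: "('g::ab_group_add \<Rightarrow> quat) set" where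
  "dual_hom_real = {\<gamma> \<in> dual_hom. \<forall>g. \<gamma> g \<in> range qreal}"

definition dual_star :: "('g \<Rightarrow> quat) \<Rightarrow> ('g \<Rightarrow> quat)" where
  "dual_star \<gamma> = (\<lambda>g. qcnj (\<gamma> g))"

definition radon_on :: "'a::topological_space set \<Rightarrow> 'a measure \<Rightarrow> bool" where
  "radon_on S \<mu> \<longleftrightarrow>
     space \<mu> = S \<and> sets \<mu> = sets (restrict_space borel S) \<and> finite_measure \<mu> \<and>
     (\<forall>A\<in>sets \<mu>. emeasure \<mu> A = (SUP K \<in> {K. compact K \<and> K \<subseteq> A}. emeasure \<mu> K))"

definition star_measure :: "('g \<Rightarrow> quat) measure \<Rightarrow> ('g \<Rightarrow> quat) measure" where
  "star_measure \<mu> = distr \<mu> \<mu> dual_star"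

definition restrict_measure :: "'a measure \<Rightarrow> 'a set \<Rightarrow> 'a measure" where
  "restrict_measure \<mu> N = density \<mu> (indicator N)"

definition mutually_singular :: "'a measure \<Rightarrow> 'a measure \<Rightarrow> bool" where
  "mutually_singular M N \<longleftrightarrow>
     (\<exists>A \<in> sets M. A \<in> sets N \<and> emeasure M A = 0 \<and> emeasure N (space N - A) = 0)"

end

theory Submission
  imports Defs
begin


lemma qmul_assoc: "qmul (qmul a b) c = qmul a (qmul b c)"
  by (simp add: qmul_def prod_eq_iff complex_eq_iff algebra_simps)

lemma qcnj_qmul: "qcnj (qmul p q) = qmul (qcnj q) (qcnj p)"
  by (simp add: qmul_def qcnj_def prod_eq_iff complex_eq_iff algebra_simps)

lemma qcnj_qcnj[simp]: "qcnj (qcnj q) = q"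
  by (simp add: qcnj_def)

lemma qmul_qone[simp]: "qmul q qone = q" "qmul qone q = q"
  by (simp_all add: qmul_def qone_def)

lemma norm_quat_sq: "(norm (q::quat))^2 = (Re (fst q))^2 + (Im (fst q))^2 + (Re (snd q))^2 + (Im (snd q))^2"
  by (simp add: norm_prod_def cmod_def)

lemma norm_qmul: "norm (qmul p q) = norm p * norm q"
proof -
  have "(norm (qmul p q))^2 = (norm p * norm q)^2"
    unfolding power_mult_distrib norm_quat_sq
    by (simp add: qmul_def power2_eq_square algebra_simps)
  then show ?thesis by (simp add: power2_eq_iff_nonneg)
qed

lemma norm_qcnj[simp]: "norm (qcnj q) = norm q"
  by (simp add: qcnj_def norm_prod_def)

lemma qmul_qcnj_unit: "norm u = 1 \<Longrightarrow> qmul u (qcnj u) = qone"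
  "norm u = 1 \<Longrightarrow> qmul (qcnj u) u = qone"
proof -
  assume "norm u = 1"
  then have "(norm u)^2 = 1" by simp
  then have h: "(Re (fst u))^2 + (Im (fst u))^2 + (Re (snd u))^2 + (Im (snd u))^2 = 1"
    unfolding norm_quat_sq .
  show "qmul u (qcnj u) = qone" "qmul (qcnj u) u = qone"
    using h by (simp_all add: qmul_def qcnj_def qone_def prod_eq_iff complex_eq_iff power2_eq_square algebra_simps)
qed



definition rot :: "quat \<Rightarrow> quat \<Rightarrow> quat" where
  "rot u q = qmul (qmul u q) (qcnj u)"

lemma qmul_add_left: "qmul (a + b) c = qmul a c + qmul b c"
  by (simp add: qmul_def algebra_simps)
lemma qmul_add_right: "qmul c (a + b) = qmul c a + qmul c b"
  by (simp add: qmul_def algebra_simps)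
lemma qmul_scaleR_left: "qmul (r *\<^sub>R a) c = r *\<^sub>R qmul a c"
  by (simp add: qmul_def algebra_simps scaleR_conv_of_real)
lemma qmul_scaleR_right: "qmul c (r *\<^sub>R a) = r *\<^sub>R qmul c a"
  by (simp add: qmul_def algebra_simps scaleR_conv_of_real)

lemma bounded_linear_qcnj: "bounded_linear qcnj"
  by (rule bounded_linear_intro[where K=1]) (auto simp: qcnj_def scaleR_conv_of_real norm_prod_def)

lemma bounded_linear_rot: "bounded_linear (rot u)"
  by (rule bounded_linear_intro[where K="norm u * norm u"])
     (auto simp: rot_def qmul_add_left qmul_add_right qmul_scaleR_left qmul_scaleR_right norm_qmul)

lemma rot_qmul: "norm u = 1 \<Longrightarrow> rot u (qmul p q) = qmul (rot u p) (rot u q)"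
proof -
  assume u: "norm u = 1"
  have "qmul (rot u p) (rot u q) = qmul (qmul u p) (qmul (qmul (qcnj u) u) (qmul q (qcnj u)))"
    by (simp add: rot_def qmul_assoc)
  also have "\<dots> = rot u (qmul p q)" using u by (simp add: qmul_qcnj_unit rot_def qmul_assoc)
  finally show ?thesis ..
qed

lemma norm_rot: "norm u = 1 \<Longrightarrow> norm (rot u q) = norm q"
  by (simp add: rot_def norm_qmul)

lemma rot_fix: "snd q = 0 \<Longrightarrow> Im (fst q) = 0 \<Longrightarrow> norm u = 1 \<Longrightarrow> rot u q = q"
proof -
  assume a: "snd q = 0" "Im (fst q) = 0" and u: "norm u = 1"
  have "q = (complex_of_real (Re (fst q)), 0)" using a by (simp add: prod_eq_iff complex_eq_iff)
  then have "q = Re (fst q) *\<^sub>R qone" by (simp add: qone_def scaleR_conv_of_real)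
  then show ?thesis using u
    by (metis qmul_qcnj_unit(1) qmul_qone(1) qmul_scaleR_left qmul_scaleR_right rot_def)
qed

lemma qcnj_fix: "qcnj q = q \<Longrightarrow> snd q = 0 \<and> Im (fst q) = 0"
  by (auto simp: qcnj_def prod_eq_iff complex_eq_iff)

lemma qcnj_rot: "qcnj (rot u q) = rot u (qcnj q)"
  by (simp add: rot_def qcnj_qmul qmul_assoc)



definition rotc :: "quat \<Rightarrow> ('g \<Rightarrow> quat) \<Rightarrow> ('g \<Rightarrow> quat)" where
  "rotc u \<gamma> = (\<lambda>g. rot u (\<gamma> g))"

lemma hom_comm: "\<gamma> \<in> dual_hom \<Longrightarrow> qmul (\<gamma> g) (\<gamma> h) = qmul (\<gamma> h) (\<gamma> (g::'g::ab_group_add))"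
  proof -
  assume "\<gamma> \<in> dual_hom"
  then have "\<forall>g h. \<gamma> (g + h) = qmul (\<gamma> g) (\<gamma> h)" by (simp add: dual_hom_def)
  then show ?thesis by (metis add.commute)
qed

lemma star_dual_hom: "\<gamma> \<in> dual_hom \<Longrightarrow> dual_star \<gamma> \<in> (dual_hom :: ('g::ab_group_add \<Rightarrow> quat) set)"
proof -
  assume g: "\<gamma> \<in> dual_hom"
  have "qcnj (\<gamma> (a + b)) = qmul (qcnj (\<gamma> a)) (qcnj (\<gamma> b))" for a b
    using g hom_comm[OF g, of b a] unfolding dual_hom_def by (simp add: qcnj_qmul) (metis qcnj_qmul)
  then show ?thesis using g unfolding dual_hom_def dual_star_def by simp
qed

lemma rotc_dual_hom: "norm u = 1 \<Longrightarrow> \<gamma> \<in> dual_hom \<Longrightarrow> rotc u \<gamma> \<in> dual_hom"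
  unfolding dual_hom_def rotc_def by (simp add: rot_qmul norm_rot)

lemma star_star[simp]: "dual_star (dual_star \<gamma>) = \<gamma>"
  by (simp add: dual_star_def)


lemma range_qreal: "range qreal = {q. snd q = 0 \<and> Im (fst q) = 0}"
proof (intro set_eqI iffI)
  fix q :: quat assume "q \<in> range qreal" then show "q \<in> {q. snd q = 0 \<and> Im (fst q) = 0}"
    by (auto simp: qreal_def)
next
  fix q :: quat assume "q \<in> {q. snd q = 0 \<and> Im (fst q) = 0}"
  then have "q = qreal (Re (fst q))" by (simp add: qreal_def prod_eq_iff complex_eq_iff)
  then show "q \<in> range qreal" by blast
qed

definition nonreal :: "quat \<Rightarrow> bool" where
  "nonreal q \<longleftrightarrow> snd q \<noteq> 0 \<or> Im (fst q) \<noteq> 0"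

lemma dual_hom_real_iff: "dual_hom_real = {\<gamma> \<in> dual_hom. \<forall>g. \<not> nonreal (\<gamma> g)}"
  by (auto simp: dual_hom_real_def range_qreal nonreal_def)

lemma nonreal_qcnj[simp]: "nonreal (qcnj q) = nonreal q"
  by (auto simp: nonreal_def qcnj_def)

lemma cont_coord: "continuous_on A (\<lambda>\<gamma>::'g \<Rightarrow> quat. \<gamma> g)"
  by (rule continuous_on_subset[OF continuous_on_product_coordinates subset_UNIV])

lemma cont_star: "continuous_on A (dual_star :: ('g \<Rightarrow> quat) \<Rightarrow> _)"
proof -
  have "continuous_on A (\<lambda>\<gamma>::'g \<Rightarrow> quat. qcnj (\<gamma> g))" for g
    by (rule bounded_linear.continuous_on[OF bounded_linear_qcnj cont_coord])
  then show ?thesis unfolding dual_star_def by (rule continuous_on_coordinatewise_then_product)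
qed

lemma cont_rotc: "continuous_on A (rotc u :: ('g \<Rightarrow> quat) \<Rightarrow> _)"
proof -
  have "continuous_on A (\<lambda>\<gamma>::'g \<Rightarrow> quat. rot u (\<gamma> g))" for g
    by (rule bounded_linear.continuous_on[OF bounded_linear_rot cont_coord])
  then show ?thesis unfolding rotc_def by (rule continuous_on_coordinatewise_then_product)
qed

lemma compact_closed_fun: "compact (K :: ('g \<Rightarrow> quat) set) \<Longrightarrow> closed K"
proof -
  assume "compact K"
  then have "compactin euclidean K" by (simp add: compactin_euclidean_iff)
  moreover have "Hausdorff_space (euclidean :: ('g \<Rightarrow> quat) topology)"
    by (metis Hausdorff_space_euclidean Hausdorff_space_product_topology euclidean_product_topology)
  ultimately have "closedin euclidean K" using compactin_imp_closedin by blast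
  then show ?thesis by (simp only: closed_closedin)
qed



definition madd :: "'a measure \<Rightarrow> 'a measure \<Rightarrow> 'a measure" where
  "madd M N = measure_of (space M) (sets M) (\<lambda>A. emeasure M A + emeasure N A)"

lemma sets_madd[simp, measurable_cong]: "sets (madd M N) = sets M"
  unfolding madd_def by (simp add: sets.sets_into_space subset_eq)

lemma space_madd[simp]: "space (madd M N) = space M"
  unfolding madd_def by (simp add: sets.sets_into_space subset_eq)

lemma emeasure_madd:
  assumes "sets N = sets M"
  shows "emeasure (madd M N) A = emeasure M A + emeasure N A"
proof (cases "A \<in> sets M")
  case True
  have ca: "countably_additive (sets M) (\<lambda>A. emeasure M A + emeasure N A)"
    unfolding countably_additive_def
  proof (intro allI impI)
    fix F :: "nat \<Rightarrow> _" assume F: "range F \<subseteq> sets M" "disjoint_family F" "\<Union> (range F) \<in> sets M"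
    have "(\<Sum>i. emeasure M (F i) + emeasure N (F i)) = (\<Sum>i. emeasure M (F i)) + (\<Sum>i. emeasure N (F i))"
      by (rule suminf_add[OF summableI summableI, symmetric])
    also have "\<dots> = emeasure M (\<Union> (range F)) + emeasure N (\<Union> (range F))"
      using F assms by (simp add: suminf_emeasure)
    finally show "(\<Sum>i. emeasure M (F i) + emeasure N (F i)) = emeasure M (\<Union> (range F)) + emeasure N (\<Union> (range F))" .
  qed
  have pos: "positive (sets M) (\<lambda>A. emeasure M A + emeasure N A)"
    by (simp add: positive_def)
  show ?thesis unfolding madd_def
    by (rule emeasure_measure_of_sigma[OF sets.sigma_algebra_axioms pos ca True])
next
  case False
  then show ?thesis using assms
    by (metis add.right_neutral emeasure_notin_sets sets_madd)
qed

lemma measurable_madd[simp]: "measurable (madd M N) K = measurable M K"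
  by (rule measurable_cong_sets) auto

lemma nn_integral_madd:
  assumes sN: "sets N = sets M" and f: "f \<in> borel_measurable M"
  shows "(\<integral>\<^sup>+x. f x \<partial>madd M N) = (\<integral>\<^sup>+x. f x \<partial>M) + (\<integral>\<^sup>+x. f x \<partial>N)"
  using f
proof (induction rule: borel_measurable_induct)
  case (cong f g)
  have "(\<integral>\<^sup>+x. f x \<partial>madd M N) = (\<integral>\<^sup>+x. g x \<partial>madd M N)"
    by (rule nn_integral_cong) (use cong in simp)
  moreover have "(\<integral>\<^sup>+x. f x \<partial>M) = (\<integral>\<^sup>+x. g x \<partial>M)"
    by (rule nn_integral_cong) (use cong in simp)
  moreover have "(\<integral>\<^sup>+x. f x \<partial>N) = (\<integral>\<^sup>+x. g x \<partial>N)"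
    by (rule nn_integral_cong) (use cong sets_eq_imp_space_eq[OF sN] in simp)
  ultimately show ?case using cong by simp
next
  case (set A)
  then show ?case using sN by (simp add: emeasure_madd)
next
  case (mult u c)
  have "(\<integral>\<^sup>+x. c * u x \<partial>madd M N) = c * (\<integral>\<^sup>+x. u x \<partial>madd M N)"
    using mult by (intro nn_integral_cmult) simp
  also have "\<dots> = c * (\<integral>\<^sup>+x. u x \<partial>M) + c * (\<integral>\<^sup>+x. u x \<partial>N)"
    using mult by (simp add: distrib_left)
  also have "\<dots> = (\<integral>\<^sup>+x. c * u x \<partial>M) + (\<integral>\<^sup>+x. c * u x \<partial>N)"
    using mult sN by (simp add: nn_integral_cmult measurable_cong_sets[OF sN refl])
  finally show ?case .
next
  case (add u v)
  have mN: "u \<in> borel_measurable N" "v \<in> borel_measurable N"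
    using add sN by (simp_all add: measurable_cong_sets[OF sN refl])
  have "(\<integral>\<^sup>+x. v x + u x \<partial>madd M N) = (\<integral>\<^sup>+x. v x \<partial>madd M N) + (\<integral>\<^sup>+x. u x \<partial>madd M N)"
    using add by (intro nn_integral_add) simp_all
  also have "\<dots> = ((\<integral>\<^sup>+x. v x \<partial>M) + (\<integral>\<^sup>+x. u x \<partial>M)) + ((\<integral>\<^sup>+x. v x \<partial>N) + (\<integral>\<^sup>+x. u x \<partial>N))"
    using add by (simp add: ac_simps)
  also have "\<dots> = (\<integral>\<^sup>+x. v x + u x \<partial>M) + (\<integral>\<^sup>+x. v x + u x \<partial>N)"
    using add mN by (simp add: nn_integral_add)
  finally show ?case .
next
  case (seq U)
  have mN: "\<And>i. U i \<in> borel_measurable N"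
    using seq sN by (simp_all add: measurable_cong_sets[OF sN refl])
  have "(\<integral>\<^sup>+x. (SUP i. U i) x \<partial>madd M N) = (SUP i. \<integral>\<^sup>+x. U i x \<partial>madd M N)"
    using seq unfolding SUP_apply by (intro nn_integral_monotone_convergence_SUP) simp_all
  also have "\<dots> = (SUP i. (\<integral>\<^sup>+x. U i x \<partial>M) + (\<integral>\<^sup>+x. U i x \<partial>N))"
    using seq by simp
  also have "\<dots> = (SUP i. (\<integral>\<^sup>+x. U i x \<partial>M)) + (SUP i. (\<integral>\<^sup>+x. U i x \<partial>N))"
    by (rule ennreal_SUP_add) (auto intro!: incseq_nn_integral seq mN)
  also have "\<dots> = (\<integral>\<^sup>+x. (SUP i. U i) x \<partial>M) + (\<integral>\<^sup>+x. (SUP i. U i) x \<partial>N)"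
    using seq mN unfolding SUP_apply by (simp add: nn_integral_monotone_convergence_SUP)
  finally show ?case .
qed


lemma integrable_madd_iff:
  fixes f :: "'a \<Rightarrow> 'b::{banach, second_countable_topology}"
  assumes sN: "sets N = sets M"
  shows "integrable (madd M N) f \<longleftrightarrow> integrable M f \<and> integrable N f"
proof -
  have mN: "f \<in> borel_measurable N \<longleftrightarrow> f \<in> borel_measurable M"
    by (simp add: measurable_cong_sets[OF sN refl])
  show ?thesis
  proof (cases "f \<in> borel_measurable M")
    case True
    have "(\<integral>\<^sup>+x. ennreal (norm (f x)) \<partial>madd M N) = (\<integral>\<^sup>+x. ennreal (norm (f x)) \<partial>M) + (\<integral>\<^sup>+x. ennreal (norm (f x)) \<partial>N)"
      using True by (intro nn_integral_madd sN) measurable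
    then show ?thesis using True mN unfolding integrable_iff_bounded by (simp add: top.not_eq_extremum)
  next
    case False
    then show ?thesis using mN by (auto dest: borel_measurable_integrable)
  qed
qed

lemma integral_madd:
  fixes f :: "'a \<Rightarrow> 'b::{banach, second_countable_topology}"
  assumes sN: "sets N = sets M" and fM: "integrable M f" and fN: "integrable N f"
  shows "integral\<^sup>L (madd M N) f = integral\<^sup>L M f + integral\<^sup>L N f"
proof -
  have "integrable (madd M N) f" using fM fN sN by (simp add: integrable_madd_iff)
  then show ?thesis
  proof induct
    case (base A c)
    then have A: "A \<in> sets M" "emeasure M A < \<infinity>" "emeasure N A < \<infinity>"
      using sN by (auto simp: emeasure_madd)
    have "measure (madd M N) A = measure M A + measure N A"
      using A sN by (simp add: measure_def emeasure_madd enn2real_plus)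
    moreover have "emeasure (madd M N) A < \<infinity>" using A sN by (simp add: emeasure_madd)
    ultimately show ?case using A sN by (simp add: scaleR_add_left)
  next
    case (add f h)
    then show ?case using sN by (simp add: integrable_madd_iff)
  next
    case (lim f s)
    have si: "\<And>i. integrable M (s i)" "\<And>i. integrable N (s i)" and fi: "integrable M f" "integrable N f"
      using lim sN by (auto simp: integrable_madd_iff)
    have spN: "space N = space M" using sets_eq_imp_space_eq[OF sN] .
    show ?case
    proof (rule LIMSEQ_unique)
      show "(\<lambda>i. integral\<^sup>L (madd M N) (s i)) \<longlonglongrightarrow> integral\<^sup>L (madd M N) f"
        by (rule integral_dominated_convergence[where w="\<lambda>x. 2 * norm (f x)"]) (use lim in auto)
      have "(\<lambda>i. integral\<^sup>L M (s i)) \<longlonglongrightarrow> integral\<^sup>L M f"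
        by (rule integral_dominated_convergence[where w="\<lambda>x. 2 * norm (f x)"]) (use lim si fi in auto)
      moreover have "(\<lambda>i. integral\<^sup>L N (s i)) \<longlonglongrightarrow> integral\<^sup>L N f"
        by (rule integral_dominated_convergence[where w="\<lambda>x. 2 * norm (f x)"]) (use lim si fi spN in auto)
      ultimately have "(\<lambda>i. integral\<^sup>L M (s i) + integral\<^sup>L N (s i)) \<longlonglongrightarrow> integral\<^sup>L M f + integral\<^sup>L N f"
        by (rule tendsto_add)
      then show "(\<lambda>i. integral\<^sup>L (madd M N) (s i)) \<longlonglongrightarrow> integral\<^sup>L M f + integral\<^sup>L N f"
        using lim by simp
    qed
  qed
qed



definition cpt_in :: "'a::topological_space set \<Rightarrow> 'a measure \<Rightarrow> bool" where
  "cpt_in X M \<longleftrightarrow> (\<forall>K. compact K \<and> K \<subseteq> X \<longrightarrow> K \<in> sets M)"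

lemma radon_space: "radon_on X M \<Longrightarrow> space M = X"
  by (simp add: radon_on_def)

lemma radon_finite: "radon_on X M \<Longrightarrow> finite_measure M"
  by (simp add: radon_on_def)

lemma radon_approx:
  assumes r: "radon_on X M" and A: "A \<in> sets M" and e: "0 < e"
  shows "\<exists>K. compact K \<and> K \<subseteq> A \<and> emeasure M A \<le> emeasure M K + ennreal e"
proof -
  have eq: "emeasure M A = (SUP K \<in> {K. compact K \<and> K \<subseteq> A}. emeasure M K)"
    using r A by (simp add: radon_on_def)
  have fin: "emeasure M A \<noteq> \<infinity>"
    using radon_finite[OF r] by (simp add: finite_measure.emeasure_finite)
  obtain K where "K \<in> {K. compact K \<and> K \<subseteq> A}" "emeasure M A < emeasure M K + ennreal e"
    using SUP_approx_ennreal[OF e _ eq fin] by blast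
  then show ?thesis by (auto intro!: exI[of _ K])
qed

lemma radon_intro:
  assumes sp: "space N = X" and st: "sets N = sets (restrict_space borel X)"
    and fin: "finite_measure N" and cpt: "cpt_in X N"
    and app: "\<And>A e. A \<in> sets N \<Longrightarrow> 0 < e \<Longrightarrow> \<exists>K. compact K \<and> K \<subseteq> A \<and> emeasure N A \<le> emeasure N K + ennreal e"
  shows "radon_on X N"
  unfolding radon_on_def
proof (intro conjI sp st fin ballI antisym)
  fix A assume A: "A \<in> sets N"
  have AX: "A \<subseteq> X" using sets.sets_into_space[OF A] sp by simp
  show "(SUP K \<in> {K. compact K \<and> K \<subseteq> A}. emeasure N K) \<le> emeasure N A"
  proof (rule SUP_least)
    fix K assume "K \<in> {K. compact K \<and> K \<subseteq> A}"
    then have "K \<in> sets N" "K \<subseteq> A" using cpt AX unfolding cpt_in_def by auto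
    then show "emeasure N K \<le> emeasure N A" using A by (simp add: emeasure_mono)
  qed
  show "emeasure N A \<le> (SUP K \<in> {K. compact K \<and> K \<subseteq> A}. emeasure N K)"
  proof (rule ennreal_le_epsilon)
    fix e :: real assume "0 < e"
    then obtain K where K: "compact K" "K \<subseteq> A" "emeasure N A \<le> emeasure N K + ennreal e"
      using app[OF A] by blast
    have "emeasure N K \<le> (SUP K \<in> {K. compact K \<and> K \<subseteq> A}. emeasure N K)"
      using K by (intro SUP_upper) auto
    then show "emeasure N A \<le> (SUP K \<in> {K. compact K \<and> K \<subseteq> A}. emeasure N K) + ennreal e"
      using K(3) by (meson add_right_mono order_trans)
  qed
qed

lemma radon_le:
  assumes r: "radon_on X M" and cpt: "cpt_in X M" and st: "sets N = sets M"
    and le: "\<And>A. A \<in> sets M \<Longrightarrow> emeasure N A \<le> emeasure M A"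
  shows "radon_on X N"
proof -
  have sp: "space N = X" using sets_eq_imp_space_eq[OF st] radon_space[OF r] by simp
  interpret M: finite_measure M using radon_finite[OF r] .
  have finN: "finite_measure N"
  proof (rule finite_measureI)
    have "emeasure N (space N) \<le> emeasure M (space M)"
      using le[of "space M"] sets_eq_imp_space_eq[OF st] by simp
    then show "emeasure N (space N) \<noteq> \<infinity>" using M.emeasure_finite
      by (metis ennreal_top_neq_one infinity_ennreal_def neq_top_trans top.extremum_uniqueI)
  qed
  show ?thesis
  proof (rule radon_intro[OF sp _ finN])
    show "sets N = sets (restrict_space borel X)" using r st by (simp add: radon_on_def)
    show "cpt_in X N" using cpt st by (simp add: cpt_in_def)
    fix A and e :: real assume A: "A \<in> sets N" and e: "0 < e"
    obtain K where K: "compact K" "K \<subseteq> A" "emeasure M A \<le> emeasure M K + ennreal e"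
      using radon_approx[OF r _ e, of A] A st by auto
    have AX: "A \<subseteq> X" using sets.sets_into_space[OF A] sp by simp
    have KM: "K \<in> sets M" using cpt K AX unfolding cpt_in_def by auto
    have AM: "A \<in> sets M" using A st by simp
    have "emeasure M (A - K) + emeasure M K = emeasure M A"
      using KM AM K(2) by (subst plus_emeasure) (auto simp: Un_absorb2)
    then have "emeasure M (A - K) + emeasure M K \<le> ennreal e + emeasure M K"
      using K(3) by (simp add: add.commute)
    then have d: "emeasure M (A - K) \<le> ennreal e"
      using M.emeasure_finite[of K] by (simp add: top.not_eq_extremum)
    have "emeasure N A = emeasure N K + emeasure N (A - K)"
      using KM AM K(2) st by (subst plus_emeasure) (auto simp: Un_absorb1)
    also have "\<dots> \<le> emeasure N K + ennreal e"
      using le[of "A - K"] d KM AM by (intro add_left_mono) auto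
    finally show "\<exists>K. compact K \<and> K \<subseteq> A \<and> emeasure N A \<le> emeasure N K + ennreal e"
      using K by blast
  qed
qed


lemma radon_madd:
  assumes r1: "radon_on X M1" and r2: "radon_on X M2" and st: "sets M2 = sets M1" and cpt: "cpt_in X M1"
  shows "radon_on X (madd M1 M2)"
proof (rule radon_intro)
  show "space (madd M1 M2) = X" using r1 by (simp add: radon_space)
  show "sets (madd M1 M2) = sets (restrict_space borel X)" using r1 by (simp add: radon_on_def)
  show "cpt_in X (madd M1 M2)" using cpt by (simp add: cpt_in_def)
  interpret M1: finite_measure M1 using radon_finite[OF r1] .
  interpret M2: finite_measure M2 using radon_finite[OF r2] .
  show "finite_measure (madd M1 M2)"
    by (rule finite_measureI) (simp add: emeasure_madd[OF st] M1.emeasure_finite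
        M2.emeasure_finite sets_eq_imp_space_eq[OF st, symmetric] top.not_eq_extremum ennreal_add_less_top)
  fix A and e :: real assume A: "A \<in> sets (madd M1 M2)" and e: "0 < e"
  have A1: "A \<in> sets M1" and A2: "A \<in> sets M2" using A st by auto
  have AX: "A \<subseteq> X" using sets.sets_into_space[OF A1] r1 by (simp add: radon_space)
  obtain K1 where K1: "compact K1" "K1 \<subseteq> A" "emeasure M1 A \<le> emeasure M1 K1 + ennreal (e/2)"
    using radon_approx[OF r1 A1, of "e/2"] e by auto
  obtain K2 where K2: "compact K2" "K2 \<subseteq> A" "emeasure M2 A \<le> emeasure M2 K2 + ennreal (e/2)"
    using radon_approx[OF r2 A2, of "e/2"] e by auto
  have KM: "K1 \<union> K2 \<in> sets M1" using cpt K1 K2 AX unfolding cpt_in_def by (auto intro: compact_Un)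
  have "emeasure (madd M1 M2) A = emeasure M1 A + emeasure M2 A" by (simp add: emeasure_madd[OF st])
  also have "\<dots> \<le> (emeasure M1 (K1 \<union> K2) + ennreal (e/2)) + (emeasure M2 (K1 \<union> K2) + ennreal (e/2))"
  proof (intro add_mono order_trans[OF K1(3)] order_trans[OF K2(3)] order_refl emeasure_mono)
  qed (use KM st in auto)
  also have "\<dots> = emeasure (madd M1 M2) (K1 \<union> K2) + ennreal e"
    using e by (simp add: emeasure_madd[OF st] ennreal_plus[symmetric] del: ennreal_plus add: ac_simps)
  finally show "\<exists>K. compact K \<and> K \<subseteq> A \<and> emeasure (madd M1 M2) A \<le> emeasure (madd M1 M2) K + ennreal e"
    using K1 K2 by (intro exI[of _ "K1 \<union> K2"]) (auto intro: compact_Un)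
qed

lemma radon_distr:
  assumes r: "radon_on X M" and cpt: "cpt_in X M" and T: "T \<in> measurable M M"
    and c: "continuous_on X T" and TX: "T ` X \<subseteq> X"
  shows "radon_on X (distr M M T)"
proof (rule radon_intro)
  show "space (distr M M T) = X" using r by (simp add: radon_space)
  show "sets (distr M M T) = sets (restrict_space borel X)" using r by (simp add: radon_on_def)
  show "cpt_in X (distr M M T)" using cpt by (simp add: cpt_in_def)
  interpret M: finite_measure M using radon_finite[OF r] .
  show "finite_measure (distr M M T)" by (rule M.finite_measure_distr[OF T])
  fix A and e :: real assume A: "A \<in> sets (distr M M T)" and e: "0 < e"
  have spM: "space M = X" using r by (simp add: radon_space)
  have B: "T -` A \<inter> X \<in> sets M" using measurable_sets[OF T, of A] A spM by simp
  obtain K where K: "compact K" "K \<subseteq> T -` A \<inter> X" "emeasure M (T -` A \<inter> X) \<le> emeasure M K + ennreal e"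
    using radon_approx[OF r B e] by auto
  have TK: "compact (T ` K)" using K by (intro compact_continuous_image continuous_on_subset[OF c]) auto
  have TKA: "T ` K \<subseteq> A" using K by auto
  have TKs: "T ` K \<in> sets M" using cpt TK TKA K TX unfolding cpt_in_def by blast
  have KM: "K \<in> sets M" using cpt K unfolding cpt_in_def by blast
  have 1: "emeasure (distr M M T) A = emeasure M (T -` A \<inter> X)"
    using A spM by (simp add: emeasure_distr[OF T])
  have 2: "emeasure M K \<le> emeasure M (T -` (T ` K) \<inter> X)"
    using K measurable_sets[OF T TKs] spM by (intro emeasure_mono) auto
  have 3: "emeasure M (T -` (T ` K) \<inter> X) = emeasure (distr M M T) (T ` K)"
    using TKs spM by (simp add: emeasure_distr[OF T])
  have "emeasure (distr M M T) A \<le> emeasure (distr M M T) (T ` K) + ennreal e"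
    using 1 2 3 K(3) by (metis add_right_mono order_trans)
  then show "\<exists>K. compact K \<and> K \<subseteq> A \<and> emeasure (distr M M T) A \<le> emeasure (distr M M T) K + ennreal e"
    using TK TKA by blast
qed



abbreviation XX :: "('g::ab_group_add \<Rightarrow> quat) set" where "XX \<equiv> dual_hom"

lemma cpt_X: "sets M = sets (restrict_space borel (XX::('g::ab_group_add \<Rightarrow> quat) set)) \<Longrightarrow> cpt_in XX M"
  unfolding cpt_in_def
proof (intro allI impI)
  fix K :: "('g \<Rightarrow> quat) set" assume s: "sets M = sets (restrict_space borel XX)" and K: "compact K \<and> K \<subseteq> XX"
  have "closed K" using compact_closed_fun K by blast
  then have "K \<in> sets borel" by (rule borel_closed)
  then have "XX \<inter> K \<in> sets (restrict_space borel XX)" by (auto simp: sets_restrict_space)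
  moreover have "XX \<inter> K = K" using K by auto
  ultimately show "K \<in> sets M" using s by simp
qed

lemma meas_coord:
  assumes s: "sets M = sets (restrict_space borel (XX::('g::ab_group_add \<Rightarrow> quat) set))"
  shows "(\<lambda>\<gamma>. \<gamma> g) \<in> borel_measurable M"
  using borel_measurable_continuous_on_restrict[OF cont_coord[of XX g]]
  by (subst measurable_cong_sets[OF s refl])

lemma meas_self:
  assumes s: "sets M = sets (restrict_space borel (XX::('g::ab_group_add \<Rightarrow> quat) set))"
    and c: "continuous_on XX T" and TX: "\<And>x. x \<in> XX \<Longrightarrow> T x \<in> XX"
  shows "T \<in> measurable M M"
proof -
  have "T \<in> measurable (restrict_space borel XX) (restrict_space borel XX)"
    by (rule measurable_restrict_space2) (use TX borel_measurable_continuous_on_restrict[OF c] in \<open>auto simp: space_restrict_space\<close>)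
  then show ?thesis by (subst measurable_cong_sets[OF s s])
qed

lemma meas_star: "sets M = sets (restrict_space borel (XX::('g::ab_group_add \<Rightarrow> quat) set)) \<Longrightarrow> dual_star \<in> measurable M M"
  by (rule meas_self[OF _ cont_star star_dual_hom])

lemma meas_rotc: "sets M = sets (restrict_space borel (XX::('g::ab_group_add \<Rightarrow> quat) set)) \<Longrightarrow> norm u = 1 \<Longrightarrow> rotc u \<in> measurable M M"
  by (rule meas_self[OF _ cont_rotc rotc_dual_hom])

lemma open_nonreal: "open {q. nonreal q}"
proof -
  have "{q. nonreal q} = {q::quat. snd q \<noteq> 0} \<union> {q. Im (fst q) \<noteq> 0}" by (auto simp: nonreal_def)
  also have "open \<dots>" by (intro open_Un open_Collect_neq continuous_intros)
  finally show ?thesis .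
qed

lemma open_U: "open {\<gamma>::'g \<Rightarrow> quat. nonreal (\<gamma> g)}"
proof -
  have "{\<gamma>::'g \<Rightarrow> quat. nonreal (\<gamma> g)} = (\<lambda>\<gamma>. \<gamma> g) -` {q. nonreal q}" by auto
  moreover have "open ((\<lambda>\<gamma>::'g \<Rightarrow> quat. \<gamma> g) -` {q. nonreal q})"
    using open_nonreal continuous_on_product_coordinates[of g] continuous_on_open_vimage[OF open_UNIV]
    by (metis inf_top.right_neutral)
  ultimately show ?thesis by simp
qed



locale qs =
  fixes \<phi> :: "'g::ab_group_add \<Rightarrow> quat" and \<mu> :: "('g \<Rightarrow> quat) measure"
    and \<tau> :: "('g \<Rightarrow> quat) measure" and f :: "('g \<Rightarrow> quat) \<Rightarrow> real"
  assumes radon: "radon_on XX \<mu>"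
    and rep: "\<forall>g. \<phi> g = (\<integral>\<gamma>. \<gamma> g \<partial>\<mu>)"
    and uniq: "\<forall>\<nu>. radon_on XX \<nu> \<and> (\<forall>g. \<phi> g = (\<integral>\<gamma>. \<gamma> g \<partial>\<nu>)) \<longrightarrow> \<nu> = \<mu>"
    and tau: "\<tau> = madd \<mu> (star_measure \<mu>)"
    and fmeas: "f \<in> borel_measurable \<tau>" and fpos: "\<And>x. 0 \<le> f x"
    and dens: "density \<tau> (\<lambda>x. ennreal (f x)) = \<mu>"
begin

lemma sets_mu: "sets \<mu> = sets (restrict_space borel XX)"
  using radon by (simp add: radon_on_def)
lemma space_mu: "space \<mu> = XX"
  using radon by (simp add: radon_on_def)
lemma sets_mus: "sets (star_measure \<mu>) = sets \<mu>"
  by (simp add: star_measure_def)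
lemma space_mus: "space (star_measure \<mu>) = XX"
  by (simp add: star_measure_def space_mu)
lemma sets_tau: "sets \<tau> = sets \<mu>"
  by (simp add: tau)
lemma space_tau: "space \<tau> = XX"
  by (simp add: tau space_mu)
lemma sets_tau': "sets \<tau> = sets (restrict_space borel XX)"
  by (simp add: sets_tau sets_mu)

lemma cpt_mu: "cpt_in XX \<mu>" by (rule cpt_X[OF sets_mu])

lemma star_meas: "dual_star \<in> measurable \<mu> \<mu>" by (rule meas_star[OF sets_mu])
lemma star_meas_tau: "dual_star \<in> measurable \<tau> \<tau>" by (rule meas_star[OF sets_tau'])

lemma radon_mus: "radon_on XX (star_measure \<mu>)"
  unfolding star_measure_def
  by (rule radon_distr[OF radon cpt_mu star_meas cont_star]) (auto intro: star_dual_hom)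

lemma radon_tau: "radon_on XX \<tau>"
  unfolding tau by (rule radon_madd[OF radon radon_mus sets_mus cpt_mu])

lemma fin_tau: "finite_measure \<tau>" using radon_tau by (rule radon_finite)
lemma fin_mu: "finite_measure \<mu>" using radon by (rule radon_finite)

lemma star_in: "x \<in> XX \<Longrightarrow> dual_star x \<in> XX" by (rule star_dual_hom)

lemma star_vimage: "A \<subseteq> XX \<Longrightarrow> dual_star -` (dual_star -` A \<inter> XX) \<inter> XX = A"
  by (auto intro: star_in)

lemma emeasure_mus: "A \<in> sets \<mu> \<Longrightarrow> emeasure (star_measure \<mu>) A = emeasure \<mu> (dual_star -` A \<inter> XX)"
  unfolding star_measure_def by (simp add: emeasure_distr[OF star_meas] space_mu)

lemma distr_tau: "distr \<tau> \<tau> dual_star = \<tau>"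
proof (rule measure_eqI)
  show "sets (distr \<tau> \<tau> dual_star) = sets \<tau>" by simp
  fix A assume "A \<in> sets (distr \<tau> \<tau> dual_star)"
  then have A: "A \<in> sets \<mu>" by (simp add: sets_tau)
  have AX: "A \<subseteq> XX" using sets.sets_into_space[OF A] space_mu by simp
  have B: "dual_star -` A \<inter> XX \<in> sets \<mu>" using measurable_sets[OF star_meas A] space_mu by simp
  have "emeasure (distr \<tau> \<tau> dual_star) A = emeasure \<tau> (dual_star -` A \<inter> XX)"
    using A by (simp add: emeasure_distr[OF star_meas_tau] space_tau sets_tau)
  also have "\<dots> = emeasure \<mu> (dual_star -` A \<inter> XX) + emeasure (star_measure \<mu>) (dual_star -` A \<inter> XX)"
    by (simp add: tau emeasure_madd sets_mus)
  also have "\<dots> = emeasure (star_measure \<mu>) A + emeasure \<mu> A"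
  proof -
    have e1: "emeasure (star_measure \<mu>) (dual_star -` A \<inter> XX) = emeasure \<mu> A"
      by (simp only: emeasure_mus[OF B] star_vimage[OF AX])
    have e2: "emeasure \<mu> (dual_star -` A \<inter> XX) = emeasure (star_measure \<mu>) A"
      by (simp only: emeasure_mus[OF A])
    show ?thesis by (simp only: e1 e2)
  qed
  also have "\<dots> = emeasure \<tau> A" by (simp add: tau emeasure_madd sets_mus add.commute)
  finally show "emeasure (distr \<tau> \<tau> dual_star) A = emeasure \<tau> A" .
qed

lemma nn_integral_star:
  assumes h: "h \<in> borel_measurable \<tau>"
  shows "(\<integral>\<^sup>+x. h (dual_star x) \<partial>\<tau>) = (\<integral>\<^sup>+x. h x \<partial>\<tau>)"
proof -
  have "(\<integral>\<^sup>+x. h x \<partial>\<tau>) = (\<integral>\<^sup>+x. h x \<partial>distr \<tau> \<tau> dual_star)" by (simp add: distr_tau)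
  also have "\<dots> = (\<integral>\<^sup>+x. h (dual_star x) \<partial>\<tau>)"
    by (rule nn_integral_distr[OF star_meas_tau]) (simp add: h)
  finally show ?thesis ..
qed

lemma integral_star:
  fixes h :: "_ \<Rightarrow> 'b::{banach, second_countable_topology}"
  assumes h: "h \<in> borel_measurable \<tau>"
  shows "(\<integral>x. h (dual_star x) \<partial>\<tau>) = (\<integral>x. h x \<partial>\<tau>)"
proof -
  have "(\<integral>x. h x \<partial>\<tau>) = (\<integral>x. h x \<partial>distr \<tau> \<tau> dual_star)" by (simp add: distr_tau)
  also have "\<dots> = (\<integral>x. h (dual_star x) \<partial>\<tau>)"
    by (rule integral_distr[OF star_meas_tau]) (simp add: h)
  finally show ?thesis ..
qed

declare fmeas[measurable]

lemma emeasure_mu_dens: "A \<in> sets \<mu> \<Longrightarrow> emeasure \<mu> A = (\<integral>\<^sup>+x. ennreal (f x) * indicator A x \<partial>\<tau>)"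
  apply (subst dens[symmetric])
  apply (rule emeasure_density)
   apply measurable
  apply (simp add: sets_tau)
  done

lemma mus_dens: "density \<tau> (\<lambda>x. ennreal (f (dual_star x))) = star_measure \<mu>"
proof (rule measure_eqI)
  show "sets (density \<tau> (\<lambda>x. ennreal (f (dual_star x)))) = sets (star_measure \<mu>)"
    by (simp add: sets_tau sets_mus)
  fix A assume "A \<in> sets (density \<tau> (\<lambda>x. ennreal (f (dual_star x))))"
  then have A: "A \<in> sets \<mu>" by (simp add: sets_tau)
  have AX: "A \<subseteq> XX" using sets.sets_into_space[OF A] space_mu by simp
  have B: "dual_star -` A \<inter> XX \<in> sets \<mu>" using measurable_sets[OF star_meas A] space_mu by simp
  have fs: "(\<lambda>x. f (dual_star x)) \<in> borel_measurable \<tau>"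
    using measurable_compose[OF star_meas_tau fmeas] .
  have "emeasure (density \<tau> (\<lambda>x. ennreal (f (dual_star x)))) A = (\<integral>\<^sup>+x. ennreal (f (dual_star x)) * indicator A x \<partial>\<tau>)"
    using A fs by (intro emeasure_density) (simp_all add: sets_tau)
  also have "\<dots> = (\<integral>\<^sup>+x. ennreal (f (dual_star x)) * indicator (dual_star -` A \<inter> XX) (dual_star x) \<partial>\<tau>)"
    by (rule nn_integral_cong) (auto simp: space_tau star_in indicator_def)
  also have "\<dots> = (\<integral>\<^sup>+x. ennreal (f x) * indicator (dual_star -` A \<inter> XX) x \<partial>\<tau>)"
  proof (rule nn_integral_star)
    have [measurable]: "dual_star -` A \<inter> XX \<in> sets \<tau>" using B by (simp add: sets_tau)
    show "(\<lambda>x. ennreal (f x) * indicator (dual_star -` A \<inter> XX) x) \<in> borel_measurable \<tau>" by measurable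
  qed
  also have "\<dots> = emeasure (star_measure \<mu>) A"
    using A B by (simp add: emeasure_mus emeasure_mu_dens)
  finally show "emeasure (density \<tau> (\<lambda>x. ennreal (f (dual_star x)))) A = emeasure (star_measure \<mu>) A" .
qed

lemma f_int: "integrable \<tau> f"
proof -
  have "emeasure \<mu> XX = (\<integral>\<^sup>+x. ennreal (f x) * indicator XX x \<partial>\<tau>)"
    by (rule emeasure_mu_dens) (metis sets.top space_mu)
  also have "\<dots> = (\<integral>\<^sup>+x. ennreal (f x) \<partial>\<tau>)"
    by (rule nn_integral_cong) (simp add: space_tau)
  finally have "(\<integral>\<^sup>+x. ennreal (f x) \<partial>\<tau>) = emeasure \<mu> XX" ..
  also have "\<dots> < \<infinity>" using finite_measure.emeasure_finite[OF fin_mu] by (simp add: top.not_eq_extremum)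
  finally show ?thesis using fmeas fpos by (intro integrableI_nonneg) auto
qed

end



context qs begin

definition NN :: "('g \<Rightarrow> quat) set" where
  "NN = {\<gamma> \<in> XX. \<exists>g. nonreal (\<gamma> g)}"

definition mm :: "('g \<Rightarrow> quat) \<Rightarrow> real" where
  "mm \<gamma> = (if \<gamma> \<in> NN then min (f \<gamma>) (f (dual_star \<gamma>)) else 0)"

lemma NN_eq: "NN = XX - dual_hom_real"
  by (auto simp: NN_def dual_hom_real_iff)

lemma sets_XX_open: "open U \<Longrightarrow> XX \<inter> U \<in> sets \<tau>"
  unfolding sets_tau' sets_restrict_space by (auto intro: borel_open)

lemma NN_sets[measurable]: "NN \<in> sets \<tau>"
proof -
  have eq: "NN = XX \<inter> (\<Union>g. {\<gamma>. nonreal (\<gamma> g)})" by (auto simp: NN_def)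
  have o: "open (\<Union>g. {\<gamma>::'g \<Rightarrow> quat. nonreal (\<gamma> g)})" by (intro open_UN ballI open_U)
  from sets_XX_open[OF o] show ?thesis by (simp only: eq)
qed

lemma star_NN: "\<gamma> \<in> XX \<Longrightarrow> dual_star \<gamma> \<in> NN \<longleftrightarrow> \<gamma> \<in> NN"
proof
  assume "\<gamma> \<in> XX" "dual_star \<gamma> \<in> NN"
  then obtain g where "nonreal (dual_star \<gamma> g)" by (auto simp: NN_def)
  then have "nonreal (\<gamma> g)" by (simp add: dual_star_def)
  then show "\<gamma> \<in> NN" using \<open>\<gamma> \<in> XX\<close> by (auto simp: NN_def)
next
  assume "\<gamma> \<in> XX" "\<gamma> \<in> NN"
  then obtain g where "nonreal (\<gamma> g)" by (auto simp: NN_def)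
  then have "nonreal (dual_star \<gamma> g)" by (simp add: dual_star_def)
  then show "dual_star \<gamma> \<in> NN" using star_in[OF \<open>\<gamma> \<in> XX\<close>] by (auto simp: NN_def)
qed

lemma f_star_meas[measurable]: "(\<lambda>x. f (dual_star x)) \<in> borel_measurable \<tau>"
  using measurable_compose[OF star_meas_tau fmeas] .

lemma mm_meas[measurable]: "mm \<in> borel_measurable \<tau>"
  unfolding mm_def by measurable

lemma mm_nonneg: "0 \<le> mm x" by (simp add: mm_def fpos)
lemma mm_le: "mm x \<le> f x" by (simp add: mm_def fpos)
lemma mm_star: "x \<in> XX \<Longrightarrow> mm (dual_star x) = mm x"
  by (simp add: mm_def star_NN min.commute)

lemma radon_dens_le:
  assumes h: "h \<in> borel_measurable \<tau>" and hp: "\<And>x. 0 \<le> h x" and hf: "\<And>x. h x \<le> f x"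
  shows "radon_on XX (density \<tau> (\<lambda>x. ennreal (h x)))"
proof (rule radon_le[OF radon cpt_mu])
  show "sets (density \<tau> (\<lambda>x. ennreal (h x))) = sets \<mu>" by (simp add: sets_tau)
  fix A assume A: "A \<in> sets \<mu>"
  have "emeasure (density \<tau> (\<lambda>x. ennreal (h x))) A = (\<integral>\<^sup>+x. ennreal (h x) * indicator A x \<partial>\<tau>)"
    using A h by (intro emeasure_density) (simp_all add: sets_tau)
  also have "\<dots> \<le> (\<integral>\<^sup>+x. ennreal (f x) * indicator A x \<partial>\<tau>)"
    using hf by (intro nn_integral_mono mult_right_mono) (auto simp: ennreal_leI)
  also have "\<dots> = emeasure \<mu> A" using A by (simp add: emeasure_mu_dens)
  finally show "emeasure (density \<tau> (\<lambda>x. ennreal (h x))) A \<le> emeasure \<mu> A" .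
qed

lemma coord_int:
  assumes "finite_measure M" "sets M = sets \<mu>"
  shows "integrable M (\<lambda>\<gamma>. \<gamma> g)"
proof -
  interpret M: finite_measure M by fact
  have sp: "space M = XX" using sets_eq_imp_space_eq[OF assms(2)] space_mu by simp
  show ?thesis
    by (rule M.integrable_const_bound[where B=1])
       (use sp meas_coord[of M g] assms(2) sets_mu in \<open>auto simp: dual_hom_def\<close>)
qed

end



context qs begin

lemma contra:
  assumes S[measurable]: "S \<in> sets \<tau>"
    and symm: "\<And>\<gamma>. \<gamma> \<in> XX \<Longrightarrow> dual_star \<gamma> \<in> S \<longleftrightarrow> \<gamma> \<in> S"
    and u: "norm u = 1" and disp: "\<And>\<gamma>. \<gamma> \<in> S \<Longrightarrow> rotc u \<gamma> \<notin> S"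
    and pos: "emeasure (density \<tau> (\<lambda>x. ennreal (mm x))) S > 0"
  shows False
proof -
  define w where "w x = mm x * indicator S x" for x
  have w_meas[measurable]: "w \<in> borel_measurable \<tau>" unfolding w_def by measurable
  have w_nn: "0 \<le> w x" for x by (simp add: w_def mm_nonneg)
  have w_le: "w x \<le> f x" for x using mm_le[of x] fpos[of x] by (auto simp: w_def indicator_def)
  have w_star: "x \<in> XX \<Longrightarrow> w (dual_star x) = w x" for x
    using symm[of x] by (simp add: w_def mm_star indicator_def)
  have fw_meas[measurable]: "(\<lambda>x. f x - w x) \<in> borel_measurable \<tau>" by measurable
  define \<rho> where "\<rho> = density \<tau> (\<lambda>x. ennreal (w x))"
  define \<nu>1 where "\<nu>1 = density \<tau> (\<lambda>x. ennreal (f x - w x))"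
  define \<nu>2 where "\<nu>2 = distr \<rho> \<rho> (rotc u)"
  define \<nu> where "\<nu> = madd \<nu>1 \<nu>2"
  have sets_rho: "sets \<rho> = sets \<mu>" by (simp add: \<rho>_def sets_tau)
  have sets_nu1: "sets \<nu>1 = sets \<mu>" by (simp add: \<nu>1_def sets_tau)
  have sets_nu2: "sets \<nu>2 = sets \<mu>" by (simp add: \<nu>2_def sets_rho)
  have sets_nu: "sets \<nu> = sets \<mu>" by (simp add: \<nu>_def sets_nu1)
  have rot_meas: "rotc u \<in> measurable \<rho> \<rho>" by (rule meas_rotc[OF _ u]) (simp add: sets_rho sets_mu)
  have r_rho: "radon_on XX \<rho>" unfolding \<rho>_def by (rule radon_dens_le) (auto simp: w_nn w_le)
  have r_nu1: "radon_on XX \<nu>1" unfolding \<nu>1_def by (rule radon_dens_le) (auto simp: w_le w_nn)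
  have r_nu2: "radon_on XX \<nu>2" unfolding \<nu>2_def
    by (rule radon_distr[OF r_rho cpt_X rot_meas cont_rotc]) (auto simp: sets_rho sets_mu rotc_dual_hom[OF u])
  have r_nu: "radon_on XX \<nu>" unfolding \<nu>_def
    by (rule radon_madd[OF r_nu1 r_nu2]) (auto simp: sets_nu1 sets_nu2 intro: cpt_X simp: sets_mu)
  have int_phi: "\<phi> g = (\<integral>\<gamma>. \<gamma> g \<partial>\<nu>)" for g
  proof -
    have cm: "(\<lambda>\<gamma>::'g \<Rightarrow> quat. \<gamma> g) \<in> borel_measurable \<tau>" by (rule meas_coord[OF sets_tau'])
    have nb: "\<And>x. x \<in> space \<tau> \<Longrightarrow> norm (x g) = 1" by (simp add: space_tau dual_hom_def)
    have i1: "integrable \<nu>1 (\<lambda>\<gamma>. \<gamma> g)"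
      by (rule coord_int[OF _ sets_nu1]) (rule radon_finite[OF r_nu1])
    have i2: "integrable \<nu>2 (\<lambda>\<gamma>. \<gamma> g)"
      by (rule coord_int[OF _ sets_nu2]) (rule radon_finite[OF r_nu2])
    have intf: "integrable \<tau> (\<lambda>x. f x *\<^sub>R x g)"
      by (rule Bochner_Integration.integrable_bound[OF f_int]) (use cm nb fpos in \<open>auto intro!: AE_I2\<close>)
    have intw: "integrable \<tau> (\<lambda>x. w x *\<^sub>R x g)"
      by (rule Bochner_Integration.integrable_bound[OF f_int]) (use cm nb w_nn w_le fpos in \<open>auto intro!: AE_I2 simp: abs_of_nonneg\<close>)
    have intfw: "integrable \<tau> (\<lambda>x. (f x - w x) *\<^sub>R x g)"
      by (rule Bochner_Integration.integrable_bound[OF f_int]) (use cm nb w_nn w_le fpos in \<open>auto intro!: AE_I2 simp: abs_of_nonneg\<close>)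
    define q where "q = (\<integral>x. w x *\<^sub>R x g \<partial>\<tau>)"
    have "qcnj q = (\<integral>x. qcnj (w x *\<^sub>R x g) \<partial>\<tau>)"
      unfolding q_def by (rule integral_bounded_linear[OF bounded_linear_qcnj intw, symmetric])
    also have "\<dots> = (\<integral>x. (\<lambda>y. w y *\<^sub>R y g) (dual_star x) \<partial>\<tau>)"
    proof (rule Bochner_Integration.integral_cong[OF refl])
      fix x assume "x \<in> space \<tau>"
      then have "w (dual_star x) = w x" by (simp add: space_tau w_star)
      then show "qcnj (w x *\<^sub>R x g) = (\<lambda>y. w y *\<^sub>R y g) (dual_star x)"
        by (simp add: linear_simps(5)[OF bounded_linear_qcnj]) (simp add: dual_star_def)
    qed
    also have "\<dots> = q" unfolding q_def by (rule integral_star) (use cm in measurable)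
    finally have "qcnj q = q" .
    then have qr: "rot u q = q" using qcnj_fix rot_fix u by blast
    have "(\<integral>\<gamma>. \<gamma> g \<partial>\<nu>) = (\<integral>\<gamma>. \<gamma> g \<partial>\<nu>1) + (\<integral>\<gamma>. \<gamma> g \<partial>\<nu>2)"
      unfolding \<nu>_def by (rule integral_madd[OF _ i1 i2]) (simp add: sets_nu1 sets_nu2)
    also have "(\<integral>\<gamma>. \<gamma> g \<partial>\<nu>1) = (\<integral>x. (f x - w x) *\<^sub>R x g \<partial>\<tau>)"
      unfolding \<nu>1_def by (rule integral_density) (use cm w_le in auto)
    also have "(\<integral>\<gamma>. \<gamma> g \<partial>\<nu>2) = (\<integral>\<gamma>. rotc u \<gamma> g \<partial>\<rho>)"
      unfolding \<nu>2_def by (rule integral_distr[OF rot_meas]) (simp add: meas_coord sets_rho sets_mu)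
    also have "\<dots> = (\<integral>x. w x *\<^sub>R rot u (x g) \<partial>\<tau>)"
      unfolding \<rho>_def rotc_def
      by (rule integral_density) (use w_nn in \<open>auto intro: borel_measurable_continuous_on[OF bounded_linear.continuous_on[OF bounded_linear_rot continuous_on_id] cm]\<close>)
    also have "\<dots> = (\<integral>x. rot u (w x *\<^sub>R x g) \<partial>\<tau>)"
      by (simp add: linear_simps(5)[OF bounded_linear_rot])
    also have "\<dots> = rot u q"
      unfolding q_def by (rule integral_bounded_linear[OF bounded_linear_rot intw])
    also have "\<dots> = q" by (rule qr)
    finally have "(\<integral>\<gamma>. \<gamma> g \<partial>\<nu>) = (\<integral>x. (f x - w x) *\<^sub>R x g \<partial>\<tau>) + (\<integral>x. w x *\<^sub>R x g \<partial>\<tau>)"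
      unfolding q_def .
    also have "\<dots> = (\<integral>x. (f x - w x) *\<^sub>R x g + w x *\<^sub>R x g \<partial>\<tau>)"
      by (rule Bochner_Integration.integral_add[OF intfw intw, symmetric])
    also have "\<dots> = (\<integral>x. f x *\<^sub>R x g \<partial>\<tau>)"
      by (simp add: scaleR_add_left[symmetric])
    also have "\<dots> = (\<integral>\<gamma>. \<gamma> g \<partial>\<mu>)"
      by (subst dens[symmetric], rule integral_density[symmetric]) (use cm fpos in auto)
    finally show ?thesis using rep by simp
  qed
  have "\<nu> = \<mu>" using uniq r_nu int_phi by blast
  have Smu: "S \<in> sets \<mu>" using S by (simp add: sets_tau)
  have e2: "emeasure \<nu>2 S = 0"
  proof -
    have Sr: "S \<in> sets \<rho>" using Smu sets_rho by simp
    have "emeasure \<nu>2 S = emeasure \<rho> (rotc u -` S \<inter> space \<rho>)"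
      unfolding \<nu>2_def by (rule emeasure_distr[OF rot_meas Sr])
    also have "\<dots> = (\<integral>\<^sup>+x. ennreal (w x) * indicator (rotc u -` S \<inter> space \<rho>) x \<partial>\<tau>)"
    proof -
      have B: "rotc u -` S \<inter> space \<rho> \<in> sets \<tau>" using measurable_sets[OF rot_meas Sr] sets_rho sets_tau by simp
      have wm: "(\<lambda>x. ennreal (w x)) \<in> borel_measurable \<tau>" by measurable
      show ?thesis unfolding \<rho>_def[symmetric] using emeasure_density[OF wm B] by (simp only: \<rho>_def)
    qed
    also have "\<dots> = (\<integral>\<^sup>+x. 0 \<partial>\<tau>)"
      by (rule nn_integral_cong) (use disp in \<open>auto simp: w_def indicator_def\<close>)
    finally show ?thesis by simp
  qed
  have e1: "emeasure \<nu>1 S + emeasure (density \<tau> (\<lambda>x. ennreal (mm x))) S = emeasure \<mu> S"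
  proof -
    have "emeasure \<nu>1 S = (\<integral>\<^sup>+x. ennreal (f x - w x) * indicator S x \<partial>\<tau>)"
      unfolding \<nu>1_def by (rule emeasure_density) auto
    moreover have "emeasure (density \<tau> (\<lambda>x. ennreal (mm x))) S = (\<integral>\<^sup>+x. ennreal (w x) * indicator S x \<partial>\<tau>)"
      by (subst emeasure_density) (auto intro!: nn_integral_cong simp: w_def indicator_def)
    moreover have "(\<integral>\<^sup>+x. ennreal (f x - w x) * indicator S x \<partial>\<tau>) + (\<integral>\<^sup>+x. ennreal (w x) * indicator S x \<partial>\<tau>)
        = (\<integral>\<^sup>+x. ennreal (f x - w x) * indicator S x + ennreal (w x) * indicator S x \<partial>\<tau>)"
      by (rule nn_integral_add[symmetric]) auto
    moreover have "\<dots> = (\<integral>\<^sup>+x. ennreal (f x) * indicator S x \<partial>\<tau>)"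
      by (rule nn_integral_cong) (use w_le w_nn in \<open>auto simp: indicator_def ennreal_plus[symmetric] simp del: ennreal_plus\<close>)
    ultimately show ?thesis using Smu by (simp add: emeasure_mu_dens)
  qed
  have "emeasure \<mu> S = emeasure \<nu> S" using \<open>\<nu> = \<mu>\<close> by simp
  also have "\<dots> = emeasure \<nu>1 S" by (simp add: \<nu>_def emeasure_madd sets_nu1 sets_nu2 e2)
  finally have "emeasure \<mu> S + emeasure (density \<tau> (\<lambda>x. ennreal (mm x))) S = emeasure \<mu> S"
    using e1 by simp
  moreover have "emeasure \<mu> S \<noteq> \<infinity>" using finite_measure.emeasure_finite[OF fin_mu] by simp
  ultimately have "emeasure (density \<tau> (\<lambda>x. ennreal (mm x))) S = 0"
    by (metis add.right_neutral ennreal_add_left_cancel)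
  then show False using pos by simp
qed

end



definition P1 :: "quat \<Rightarrow> bool" where
  "P1 p \<longleftrightarrow> Re (snd p) \<noteq> 0 \<and> Re (snd p) * Im (snd p) \<ge> 0"
definition P2 :: "quat \<Rightarrow> bool" where
  "P2 p \<longleftrightarrow> snd p \<noteq> 0 \<and> (Re (snd p) = 0 \<or> Re (snd p) * Im (snd p) < 0)"
definition P3 :: "quat \<Rightarrow> bool" where
  "P3 p \<longleftrightarrow> snd p = 0 \<and> Im (fst p) \<noteq> 0"

definition u1 :: quat where "u1 = (cis (pi/4), 0)"
definition u3 :: quat where "u3 = (complex_of_real (1 / sqrt 2), complex_of_real (1 / sqrt 2))"

lemma P_cover: "nonreal p \<Longrightarrow> P1 p \<or> P2 p \<or> P3 p"
  unfolding nonreal_def P1_def P2_def P3_def by (auto simp: complex_eq_iff)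

lemma P_cnj: "P1 (qcnj p) = P1 p" "P2 (qcnj p) = P2 p" "P3 (qcnj p) = P3 p"
  unfolding P1_def P2_def P3_def qcnj_def by auto

lemma norm_u1: "norm u1 = 1"
  by (simp add: u1_def norm_prod_def)

lemma norm_u3: "norm u3 = 1"
proof -
  have "(1 / sqrt 2)^2 + (1 / sqrt 2)^2 = (1::real)" by (simp add: power_divide)
  then show ?thesis unfolding u3_def norm_prod_def fst_conv snd_conv norm_of_real by simp
qed

lemma rot_u1: "rot u1 p = (fst p, \<i> * snd p)"
proof -
  have c1: "cis (pi/4) * cnj (cis (pi/4)) = 1" by (simp add: cis_cnj cis_mult)
  have c2: "cis (pi/4) * cis (pi/4) = \<i>" by (simp add: cis_mult)
  have "rot u1 p = (cis (pi/4) * cnj (cis (pi/4)) * fst p, cis (pi/4) * cis (pi/4) * snd p)"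
    by (simp add: rot_def u1_def qmul_def qcnj_def algebra_simps)
  then show ?thesis by (simp add: c1 c2)
qed

lemma rot_u3: "snd p = 0 \<Longrightarrow> Im (fst p) \<noteq> 0 \<Longrightarrow> snd (rot u3 p) \<noteq> 0"
proof -
  assume a: "snd p = 0" "Im (fst p) \<noteq> 0"
  have s: "(1 / sqrt 2) * (1 / sqrt 2) = (1/2::real)" by (simp add: divide_simps)
  have "Im (snd (rot u3 p)) = - 2 * Im (fst p) * ((1 / sqrt 2) * (1 / sqrt 2))"
    using a(1) by (simp add: rot_def u3_def qmul_def qcnj_def algebra_simps)
  then have "Im (snd (rot u3 p)) \<noteq> 0" using a(2) s by simp
  then show ?thesis by auto
qed

lemma P1_disp: "P1 p \<Longrightarrow> \<not> P1 (rot u1 p)"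
  unfolding P1_def rot_u1 by (auto simp: mult.commute)

lemma P2_disp: "P2 p \<Longrightarrow> \<not> P2 (rot u1 p)"
  unfolding P2_def rot_u1 by (auto simp: complex_eq_iff mult.commute)

lemma P3_disp: "P3 p \<Longrightarrow> \<not> P3 (rot u3 p)"
  unfolding P3_def using rot_u3 by auto



lemma P1_borel: "{q. P1 q} \<in> sets borel"
proof -
  have "{q. P1 q} = {q::quat. Re (snd q) \<noteq> 0} \<inter> {q. 0 \<le> Re (snd q) * Im (snd q)}" by (auto simp: P1_def)
  also have "\<dots> \<in> sets borel"
    by (intro sets.Int borel_open borel_closed open_Collect_neq closed_Collect_le continuous_intros)
  finally show ?thesis .
qed

lemma P2_borel: "{q. P2 q} \<in> sets borel"
proof -
  have "{q. P2 q} = {q::quat. snd q \<noteq> 0} \<inter> ({q. Re (snd q) = 0} \<union> {q. Re (snd q) * Im (snd q) < 0})" by (auto simp: P2_def)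
  also have "\<dots> \<in> sets borel"
    by (intro sets.Int sets.Un borel_open borel_closed open_Collect_neq closed_Collect_eq open_Collect_less continuous_intros)
  finally show ?thesis .
qed

lemma P3_borel: "{q. P3 q} \<in> sets borel"
proof -
  have "{q. P3 q} = {q::quat. snd q = 0} \<inter> {q. Im (fst q) \<noteq> 0}" by (auto simp: P3_def)
  also have "\<dots> \<in> sets borel"
    by (intro sets.Int borel_open borel_closed open_Collect_neq closed_Collect_eq continuous_intros)
  finally show ?thesis .
qed

context qs begin

abbreviation lam where "lam \<equiv> density \<tau> (\<lambda>x. ennreal (mm x))"

lemma piece:
  assumes Pb: "{q. P q} \<in> sets borel" and cnj: "\<And>p. P (qcnj p) = P p" and u: "norm u = 1"
    and disp: "\<And>p. P p \<Longrightarrow> \<not> P (rot u p)"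
  shows "emeasure lam {\<gamma> \<in> XX. P (\<gamma> g)} = 0"
proof (rule ccontr)
  assume "emeasure lam {\<gamma> \<in> XX. P (\<gamma> g)} \<noteq> 0"
  then have pos: "emeasure lam {\<gamma> \<in> XX. P (\<gamma> g)} > 0" by (simp add: zero_less_iff_neq_zero)
  have eq: "{\<gamma> \<in> XX. P (\<gamma> g)} = (\<lambda>\<gamma>. \<gamma> g) -` {q. P q} \<inter> space \<tau>" by (auto simp: space_tau)
  have S: "{\<gamma> \<in> XX. P (\<gamma> g)} \<in> sets \<tau>"
    unfolding eq by (rule measurable_sets[OF meas_coord[OF sets_tau'] Pb])
  show False
  proof (rule contra[OF S _ u _ pos])
    fix \<gamma> :: "'g \<Rightarrow> quat" assume "\<gamma> \<in> XX"
    then show "dual_star \<gamma> \<in> {\<gamma> \<in> XX. P (\<gamma> g)} \<longleftrightarrow> \<gamma> \<in> {\<gamma> \<in> XX. P (\<gamma> g)}"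
      using star_in[of \<gamma>] by (simp add: dual_star_def cnj)
  next
    fix \<gamma> :: "'g \<Rightarrow> quat" assume "\<gamma> \<in> {\<gamma> \<in> XX. P (\<gamma> g)}"
    then show "rotc u \<gamma> \<notin> {\<gamma> \<in> XX. P (\<gamma> g)}" using disp by (simp add: rotc_def)
  qed
qed

lemma radon_lam: "radon_on XX lam"
  by (rule radon_dens_le) (auto simp: mm_nonneg mm_le)

lemma lam_zero: "(\<integral>\<^sup>+x. ennreal (mm x) \<partial>\<tau>) = 0"
proof (rule ccontr)
  assume "(\<integral>\<^sup>+x. ennreal (mm x) \<partial>\<tau>) \<noteq> 0"
  then have ipos: "(\<integral>\<^sup>+x. ennreal (mm x) \<partial>\<tau>) > 0" by (simp add: zero_less_iff_neq_zero)
  have NNs: "NN \<in> sets lam" by simp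
  have "emeasure lam NN = (\<integral>\<^sup>+x. ennreal (mm x) * indicator NN x \<partial>\<tau>)"
    by (rule emeasure_density) auto
  also have "\<dots> = (\<integral>\<^sup>+x. ennreal (mm x) \<partial>\<tau>)"
    by (rule nn_integral_cong) (simp add: mm_def indicator_def)
  finally have "emeasure lam NN > 0" using ipos by simp
  moreover have "emeasure lam NN = (SUP K \<in> {K. compact K \<and> K \<subseteq> NN}. emeasure lam K)"
    using radon_lam NNs unfolding radon_on_def by blast
  ultimately obtain K where K: "compact K" "K \<subseteq> NN" "emeasure lam K > 0"
    by (metis (no_types, lifting) less_SUP_iff mem_Collect_eq)
  have "K \<subseteq> (\<Union>g. {\<gamma>::'g \<Rightarrow> quat. nonreal (\<gamma> g)})" using K(2) by (auto simp: NN_def)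
  then have cov: "K \<subseteq> (\<Union>g\<in>UNIV. {\<gamma>::'g \<Rightarrow> quat. nonreal (\<gamma> g)})" by simp
  obtain G where G: "finite G" "K \<subseteq> (\<Union>g\<in>G. {\<gamma>::'g \<Rightarrow> quat. nonreal (\<gamma> g)})"
  proof (rule compactE_image[OF K(1) _ cov])
    show "\<And>g. g \<in> UNIV \<Longrightarrow> open {\<gamma>::'g \<Rightarrow> quat. nonreal (\<gamma> g)}" by (rule open_U)
  qed blast
  have Ngs: "{\<gamma> \<in> XX. nonreal (\<gamma> g)} \<in> sets lam" for g
  proof -
    have "{\<gamma> \<in> XX. nonreal (\<gamma> g)} = XX \<inter> {\<gamma>. nonreal (\<gamma> g)}" by auto
    then show ?thesis using sets_XX_open[OF open_U] by simp
  qed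
  have "K \<subseteq> (\<Union>g\<in>G. {\<gamma> \<in> XX. nonreal (\<gamma> g)})" using G(2) K(2) by (auto simp: NN_def)
  then have "emeasure lam K \<le> emeasure lam (\<Union>g\<in>G. {\<gamma> \<in> XX. nonreal (\<gamma> g)})"
    using Ngs G(1) by (intro emeasure_mono) auto
  also have "\<dots> \<le> (\<Sum>g\<in>G. emeasure lam {\<gamma> \<in> XX. nonreal (\<gamma> g)})"
    using Ngs G(1) by (intro emeasure_subadditive_finite) auto
  finally have "(\<Sum>g\<in>G. emeasure lam {\<gamma> \<in> XX. nonreal (\<gamma> g)}) > 0" using K(3) by simp
  then obtain g where g: "emeasure lam {\<gamma> \<in> XX. nonreal (\<gamma> g)} > 0"
    by (metis (no_types, lifting) not_gr_zero sum.neutral)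
  have z1: "emeasure lam {\<gamma> \<in> XX. P1 (\<gamma> g)} = 0"
    by (rule piece[OF P1_borel _ norm_u1 P1_disp]) (simp add: P_cnj)
  have z2: "emeasure lam {\<gamma> \<in> XX. P2 (\<gamma> g)} = 0"
    by (rule piece[OF P2_borel _ norm_u1 P2_disp]) (simp add: P_cnj)
  have z3: "emeasure lam {\<gamma> \<in> XX. P3 (\<gamma> g)} = 0"
    by (rule piece[OF P3_borel _ norm_u3 P3_disp]) (simp add: P_cnj)
  have ps: "{\<gamma> \<in> XX. P (\<gamma> g)} \<in> sets lam" if "{q. P q} \<in> sets borel" for P
  proof -
    have eq: "{\<gamma> \<in> XX. P (\<gamma> g)} = (\<lambda>\<gamma>. \<gamma> g) -` {q. P q} \<inter> space \<tau>" by (auto simp: space_tau)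
    show ?thesis unfolding eq using measurable_sets[OF meas_coord[OF sets_tau'] that] by simp
  qed
  have "{\<gamma> \<in> XX. nonreal (\<gamma> g)} \<subseteq> {\<gamma> \<in> XX. P1 (\<gamma> g)} \<union> {\<gamma> \<in> XX. P2 (\<gamma> g)} \<union> {\<gamma> \<in> XX. P3 (\<gamma> g)}"
    using P_cover by blast
  then have "emeasure lam {\<gamma> \<in> XX. nonreal (\<gamma> g)} \<le> emeasure lam ({\<gamma> \<in> XX. P1 (\<gamma> g)} \<union> {\<gamma> \<in> XX. P2 (\<gamma> g)} \<union> {\<gamma> \<in> XX. P3 (\<gamma> g)})"
    using ps[OF P1_borel] ps[OF P2_borel] ps[OF P3_borel] by (intro emeasure_mono) auto
  also have "\<dots> \<le> emeasure lam ({\<gamma> \<in> XX. P1 (\<gamma> g)} \<union> {\<gamma> \<in> XX. P2 (\<gamma> g)}) + emeasure lam {\<gamma> \<in> XX. P3 (\<gamma> g)}"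
    using ps[OF P1_borel] ps[OF P2_borel] ps[OF P3_borel] by (intro emeasure_subadditive) auto
  also have "\<dots> \<le> (emeasure lam {\<gamma> \<in> XX. P1 (\<gamma> g)} + emeasure lam {\<gamma> \<in> XX. P2 (\<gamma> g)}) + emeasure lam {\<gamma> \<in> XX. P3 (\<gamma> g)}"
    using ps[OF P1_borel] ps[OF P2_borel] by (intro add_right_mono emeasure_subadditive) auto
  also have "\<dots> = 0" by (simp add: z1 z2 z3)
  finally show False using g by simp
qed

end



context qs begin

lemma singular:
  "mutually_singular (restrict_measure (star_measure \<mu>) (XX - dual_hom_real))
                     (restrict_measure \<mu> (XX - dual_hom_real))"
proof -
  have AE0: "AE x in \<tau>. ennreal (mm x) = 0"
    using lam_zero by (subst nn_integral_0_iff_AE[symmetric]) auto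
  define P where "P = {x \<in> space \<tau>. 0 < f x}"
  have Ps[measurable]: "P \<in> sets \<tau>" unfolding P_def by measurable
  have Pmu: "P \<in> sets \<mu>" using Ps by (simp add: sets_tau)
  have e1: "emeasure (density (star_measure \<mu>) (indicator NN)) P = 0"
  proof -
    have "emeasure (density (star_measure \<mu>) (indicator NN)) P = (\<integral>\<^sup>+x. indicator NN x * indicator P x \<partial>star_measure \<mu>)"
      by (rule emeasure_density) (use Pmu sets_mus sets_tau in auto)
    also have "\<dots> = (\<integral>\<^sup>+x. ennreal (f (dual_star x)) * (indicator NN x * indicator P x) \<partial>\<tau>)"
      by (subst mus_dens[symmetric], rule nn_integral_density) auto
    also have "\<dots> = (\<integral>\<^sup>+x. 0 \<partial>\<tau>)"
    proof (rule nn_integral_cong_AE)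
      show "AE x in \<tau>. ennreal (f (dual_star x)) * (indicator NN x * indicator P x) = 0"
        using AE0
      proof eventually_elim
        case (elim x)
        show ?case
        proof (cases "x \<in> NN \<and> x \<in> P")
          case True
          then have "min (f x) (f (dual_star x)) = 0" using elim by (simp add: mm_def fpos min_def)
          moreover have "0 < f x" using True by (simp add: P_def)
          ultimately have "f (dual_star x) = 0" by (simp add: min_def split: if_splits)
          then show ?thesis by simp
        qed (auto simp: indicator_def)
      qed
    qed
    finally show ?thesis by simp
  qed
  have e2: "emeasure (density \<mu> (indicator NN)) (space (density \<mu> (indicator NN)) - P) = 0"
  proof -
    have D: "space (density \<mu> (indicator NN)) - P \<in> sets \<mu>" using Pmu by (simp add: space_mu) (metis sets.compl_sets space_mu)
    have "emeasure (density \<mu> (indicator NN)) (space (density \<mu> (indicator NN)) - P)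
        = (\<integral>\<^sup>+x. indicator NN x * indicator (space (density \<mu> (indicator NN)) - P) x \<partial>\<mu>)"
      by (rule emeasure_density) (use D sets_tau in auto)
    also have "\<dots> = (\<integral>\<^sup>+x. ennreal (f x) * (indicator NN x * indicator (space (density \<mu> (indicator NN)) - P) x) \<partial>\<tau>)"
      by (subst dens[symmetric], rule nn_integral_density) (use D sets_tau in auto)
    also have "\<dots> = (\<integral>\<^sup>+x. 0 \<partial>\<tau>)"
    proof (rule nn_integral_cong)
      fix x assume x: "x \<in> space \<tau>"
      show "ennreal (f x) * (indicator NN x * indicator (space (density \<mu> (indicator NN)) - P) x) = 0"
      proof (cases "x \<in> P")
        case False
        then have "f x \<le> 0" using x by (simp add: P_def)
        then show ?thesis by (simp add: ennreal_eq_0_iff)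
      qed (simp add: indicator_def)
    qed
    finally show ?thesis by simp
  qed
  show ?thesis
    unfolding mutually_singular_def restrict_measure_def NN_eq[symmetric]
    using e1 e2 Pmu sets_mus by (intro bexI[of _ P] conjI) auto
qed

end



theorem mainTheorem15:
  fixes \<phi> :: "'g::ab_group_add \<Rightarrow> quat" and \<mu> :: "('g \<Rightarrow> quat) measure"
  assumes "\<phi> \<in> P_star"
    and "radon_on dual_hom \<mu>"
    and "\<forall>g. \<phi> g = (\<integral>\<gamma>. \<gamma> g \<partial>\<mu>)"
    and "\<forall>\<nu>. radon_on dual_hom \<nu> \<and> (\<forall>g. \<phi> g = (\<integral>\<gamma>. \<gamma> g \<partial>\<nu>)) \<longrightarrow> \<nu> = \<mu>"
  shows "mutually_singular
           (restrict_measure (star_measure \<mu>) (dual_hom - dual_hom_real))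
           (restrict_measure \<mu> (dual_hom - dual_hom_real))"
proof -
  note radon = assms(2)
  have sets_mu: "sets \<mu> = sets (restrict_space borel XX)" using radon by (simp add: radon_on_def)
  have space_mu: "space \<mu> = XX" using radon by (simp add: radon_on_def)
  have cpt: "cpt_in XX \<mu>" by (rule cpt_X[OF sets_mu])
  have sets_mus: "sets (star_measure \<mu>) = sets \<mu>" by (simp add: star_measure_def)
  have radon_mus: "radon_on XX (star_measure \<mu>)"
    unfolding star_measure_def
    by (rule radon_distr[OF radon cpt meas_star[OF sets_mu] cont_star]) (auto intro: star_dual_hom)
  define \<tau> where "\<tau> = madd \<mu> (star_measure \<mu>)"
  have radon_tau: "radon_on XX \<tau>" unfolding \<tau>_def by (rule radon_madd[OF radon radon_mus sets_mus cpt])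
  interpret T: finite_measure \<tau> using radon_tau by (rule radon_finite)
  have sets_tau: "sets \<tau> = sets \<mu>" by (simp add: \<tau>_def)
  have ac: "absolutely_continuous \<tau> \<mu>"
    unfolding absolutely_continuous_def
  proof
    fix A assume "A \<in> null_sets \<tau>"
    then have A: "A \<in> sets \<mu>" "emeasure \<mu> A + emeasure (star_measure \<mu>) A = 0"
      by (auto simp: \<tau>_def emeasure_madd sets_mus)
    then show "A \<in> null_sets \<mu>" by auto
  qed
  obtain f0 where f0: "f0 \<in> borel_measurable \<tau>" "density \<tau> f0 = \<mu>"
    using T.Radon_Nikodym[OF ac sets_tau[symmetric]] by blast
  have "(\<integral>\<^sup>+x. f0 x \<partial>\<tau>) = (\<integral>\<^sup>+x. f0 x * indicator (space \<tau>) x \<partial>\<tau>)"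
    by (rule nn_integral_cong) simp
  also have "\<dots> = emeasure (density \<tau> f0) (space \<tau>)"
    by (rule emeasure_density[symmetric]) (use f0 in auto)
  also have "\<dots> = emeasure \<mu> (space \<mu>)"
    using f0(2) sets_eq_imp_space_eq[OF sets_tau] by simp
  also have "\<dots> \<noteq> \<infinity>" using finite_measure.emeasure_finite[OF radon_finite[OF radon]] by simp
  finally have fin: "(\<integral>\<^sup>+x. f0 x \<partial>\<tau>) \<noteq> \<infinity>" .
  define f where "f x = enn2real (f0 x)" for x
  have fm: "f \<in> borel_measurable \<tau>" unfolding f_def using f0(1) by measurable
  have "density \<tau> (\<lambda>x. ennreal (f x)) = density \<tau> f0"
  proof (rule density_cong)
    show "(\<lambda>x. ennreal (f x)) \<in> borel_measurable \<tau>" using fm by measurable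
    show "f0 \<in> borel_measurable \<tau>" by (rule f0(1))
    show "AE x in \<tau>. ennreal (f x) = f0 x"
      using nn_integral_PInf_AE[OF f0(1) fin]
      by eventually_elim (simp add: f_def top.not_eq_extremum)
  qed
  then have dens: "density \<tau> (\<lambda>x. ennreal (f x)) = \<mu>" using f0(2) by simp
  interpret qs \<phi> \<mu> \<tau> f
    by unfold_locales (use assms fm dens in \<open>auto simp: \<tau>_def f_def\<close>)
  show ?thesis by (rule singular)
qed

end
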